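(* For every $n\ge1$, the cloaktic monoid $\mathcal K_n$ satisfies every semigroup identity that is satisfied by the monoid $\mathrm{TMat}_n(\mathbb T)$ of $n\times n$ upper triangular tropical matrices under tropical multiplication.
   Context: $\mathcal A_n=\{a_1<\cdots<a_n\}$. For $w\in\mathcal A_n^*$ and $1\le i\le j\le n$, $L_{[i,j]}(w)$ is the maximal length of a nondecreasing (not necessarily contiguous) subword of $w$ with all letters in $\{a_i,\dots,a_j\}$ ($0$ if none); $u\equiv_{\mathrm{clk}}v$ iff $L_{[i,j]}(u)=L_{[i,j]}(v)$ for all $i\le j$, and $\mathcal K_n=\mathcal A_n^*/{\equiv_{\mathrm{clk}}}$. Tropical semiring $\mathbb T=\mathbb R\cup\{-\infty\}$ with $\max$ as addition and $+$ as multiplication; $\mathrm{TMat}_n(\mathbb T)$ consists of the matrices with entries $-\infty$ below the diagonal, with product $(A\odot B)_{i,j}=\max_t(a_{i,t}+b_{t,j})$. A semigroup identity is a formal equality $u=v$ of two distinct nonempty words over a set of variables; a semigroup $S$ satisfies it if $\varphi(u)=\varphi(v)$ for every semigroup homomorphism $\varphi$ from the free semigroup on the variables to $S$. *)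

theory Defs
  imports Complex_Main "HOL-Library.Sublist" "HOL-Library.Extended_Real"
begin

fun eval_word :: "('s \<Rightarrow> 's \<Rightarrow> 's) \<Rightarrow> ('v \<Rightarrow> 's) \<Rightarrow> 'v list \<Rightarrow> 's" where
  "eval_word f \<sigma> [] = undefined"
| "eval_word f \<sigma> [x] = \<sigma> x"
| "eval_word f \<sigma> (x # y # xs) = f (\<sigma> x) (eval_word f \<sigma> (y # xs))"

definition semigroup_identity :: "'v list \<Rightarrow> 'v list \<Rightarrow> bool" where
  "semigroup_identity u v \<longleftrightarrow> u \<noteq> [] \<and> v \<noteq> [] \<and> u \<noteq> v"

definition satisfies_id :: "'s set \<Rightarrow> ('s \<Rightarrow> 's \<Rightarrow> 's) \<Rightarrow> 'v list \<Rightarrow> 'v list \<Rightarrow> bool" where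
  "satisfies_id S f u v \<longleftrightarrow>
     (\<forall>\<sigma>. (\<forall>x. \<sigma> x \<in> S) \<longrightarrow> eval_word f \<sigma> u = eval_word f \<sigma> v)"

text \<open>Alphabet A_n: letters 0 < 1 < ... < n-1 (a_k is represented by k-1).\<close>

definition Lint :: "nat \<Rightarrow> nat \<Rightarrow> nat list \<Rightarrow> nat" where
  "Lint i j w = Max {length s | s. subseq s w \<and> sorted s \<and> set s \<subseteq> {i..j}}"

definition clk :: "nat \<Rightarrow> nat list \<Rightarrow> nat list \<Rightarrow> bool" where
  "clk n u v \<longleftrightarrow> (\<forall>i j. i \<le> j \<and> j < n \<longrightarrow> Lint i j u = Lint i j v)"

definition clk_class :: "nat \<Rightarrow> nat list \<Rightarrow> nat list set" where
  "clk_class n w = {v \<in> lists {..<n}. clk n v w}"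

definition K_carrier :: "nat \<Rightarrow> nat list set set" where
  "K_carrier n = clk_class n ` lists {..<n}"

definition K_mult :: "nat \<Rightarrow> nat list set \<Rightarrow> nat list set \<Rightarrow> nat list set" where
  "K_mult n X Y = {w \<in> lists {..<n}. \<exists>x\<in>X. \<exists>y\<in>Y. clk n w (x @ y)}"

text \<open>Tropical semiring T = R \<union> {-\<infinity>}, modelled inside ereal (excluding +\<infinity>).
  An n \<times> n matrix is a function on indices; entries outside {..<n} are fixed to -\<infinity>.\<close>
definition TMat :: "nat \<Rightarrow> (nat \<Rightarrow> nat \<Rightarrow> ereal) set" where
  "TMat n = {A. (\<forall>i j. A i j \<noteq> \<infinity>) \<and>
                (\<forall>i j. (i \<ge> n \<or> j \<ge> n \<or> j < i) \<longrightarrow> A i j = -\<infinity>)}"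

definition trop_mult :: "nat \<Rightarrow> (nat \<Rightarrow> nat \<Rightarrow> ereal) \<Rightarrow> (nat \<Rightarrow> nat \<Rightarrow> ereal) \<Rightarrow> (nat \<Rightarrow> nat \<Rightarrow> ereal)" where
  "trop_mult n A B = (\<lambda>i j. if i < n \<and> j < n then Max ((\<lambda>t. A i t + B t j) ` {..<n}) else -\<infinity>)"

end

theory Submission
  imports Defs
begin

definition LS :: "nat \<Rightarrow> nat \<Rightarrow> nat list \<Rightarrow> nat set" where
  "LS i j w = {length s | s. subseq s w \<and> sorted s \<and> set s \<subseteq> {i..j}}"

lemma LS_fin: "finite (LS i j w)"
proof -
  have "LS i j w \<subseteq> {..length w}" unfolding LS_def by (auto dest: list_emb_length)
  thus ?thesis using finite_subset by blast
qed

lemma LS_ne: "LS i j w \<noteq> {}"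
  unfolding LS_def by (rule ccontr) (auto elim: allE[of _ "[]"])

lemma Lint_LS: "Lint i j w = Max (LS i j w)"
  unfolding Lint_def LS_def by simp

lemma Lint_ge: "subseq s w \<Longrightarrow> sorted s \<Longrightarrow> set s \<subseteq> {i..j} \<Longrightarrow> length s \<le> Lint i j w"
  unfolding Lint_LS by (rule Max_ge[OF LS_fin]) (auto simp: LS_def)

lemma Lint_obtain:
  obtains s where "subseq s w" "sorted s" "set s \<subseteq> {i..j}" "length s = Lint i j w"
proof -
  have "Max (LS i j w) \<in> LS i j w" using LS_fin LS_ne by (rule Max_in)
  thus ?thesis using that unfolding Lint_LS LS_def by auto
qed

lemma sorted_le_last: "sorted xs \<Longrightarrow> a \<in> set xs \<Longrightarrow> a \<le> last xs"
proof (induction xs)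
  case Nil thus ?case by simp
next
  case (Cons x xs)
  show ?case
  proof (cases "xs = []")
    case True thus ?thesis using Cons by simp
  next
    case False
    have "last xs \<in> set xs" using False by simp
    thus ?thesis using Cons False by auto
  qed
qed

lemma Lint_split_le:
  assumes "p \<le> t" "t \<le> q"
  shows "Lint p t x + Lint t q y \<le> Lint p q (x @ y)"
proof -
  obtain s1 where s1: "subseq s1 x" "sorted s1" "set s1 \<subseteq> {p..t}" "length s1 = Lint p t x"
    by (rule Lint_obtain)
  obtain s2 where s2: "subseq s2 y" "sorted s2" "set s2 \<subseteq> {t..q}" "length s2 = Lint t q y"
    by (rule Lint_obtain)
  have "subseq (s1 @ s2) (x @ y)" using s1 s2 by (simp add: list_emb_append_mono)
  moreover have "\<forall>a\<in>set s1. \<forall>b\<in>set s2. a \<le> b"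
  proof (intro ballI)
    fix a b assume "a \<in> set s1" "b \<in> set s2"
    then have "a \<le> t" "t \<le> b" using s1(3) s2(3) by auto
    thus "a \<le> b" by simp
  qed
  hence "sorted (s1 @ s2)" using s1 s2 by (simp add: sorted_append)
  moreover have "set (s1 @ s2) \<subseteq> {p..q}" using s1 s2 assms by auto
  ultimately have "length (s1 @ s2) \<le> Lint p q (x @ y)" by (rule Lint_ge)
  thus ?thesis using s1 s2 by simp
qed

lemma Lint_split_ex:
  assumes "p \<le> q"
  shows "\<exists>t. p \<le> t \<and> t \<le> q \<and> Lint p q (x @ y) = Lint p t x + Lint t q y"
proof -
  obtain s where s: "subseq s (x @ y)" "sorted s" "set s \<subseteq> {p..q}" "length s = Lint p q (x @ y)"
    by (rule Lint_obtain)
  then obtain s1 s2 where sp: "s = s1 @ s2" "subseq s1 x" "subseq s2 y"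
    by (auto simp: subseq_append_iff)
  define t where "t = (if s1 = [] then p else last s1)"
  have "set s1 \<subseteq> {p..q}" using s sp by auto
  hence "s1 \<noteq> [] \<Longrightarrow> last s1 \<in> {p..q}" using last_in_set[of s1] by blast
  hence pt: "p \<le> t" "t \<le> q" using assms by (auto simp: t_def)
  have "set s1 \<subseteq> {p..t}"
  proof
    fix a assume a: "a \<in> set s1"
    then have ne: "s1 \<noteq> []" by auto
    have "sorted s1" using s sp by (simp add: sorted_append)
    then have "a \<le> last s1" using a by (rule sorted_le_last)
    thus "a \<in> {p..t}" using a s sp ne by (auto simp: t_def)
  qed
  moreover have "set s2 \<subseteq> {t..q}"
  proof
    fix a assume a: "a \<in> set s2"
    have "t \<le> a"
    proof (cases "s1 = []")
      case True thus ?thesis using a s sp by (auto simp: t_def)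
    next
      case False
      then have "last s1 \<in> set s1" by simp
      thus ?thesis using a s sp False by (auto simp: t_def sorted_append)
    qed
    thus "a \<in> {t..q}" using a s sp by auto
  qed
  ultimately have "length s1 \<le> Lint p t x" "length s2 \<le> Lint t q y"
    using sp s by (auto intro!: Lint_ge simp: sorted_append)
  hence "Lint p q (x @ y) \<le> Lint p t x + Lint t q y" using s sp by simp
  with Lint_split_le[OF pt, of x y] pt show ?thesis by (intro exI[of _ t]) auto
qed

definition MM :: "nat \<Rightarrow> nat list \<Rightarrow> nat \<Rightarrow> nat \<Rightarrow> ereal" where
  "MM n w = (\<lambda>p q. if p \<le> q \<and> q < n then ereal (real (Lint p q w)) else -\<infinity>)"

lemma MM_in: "MM n w \<in> TMat n"
  unfolding TMat_def MM_def by auto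

lemma MM_append:
  assumes "n \<ge> 1"
  shows "MM n (x @ y) = trop_mult n (MM n x) (MM n y)"
proof (intro ext)
  fix p q
  show "MM n (x @ y) p q = trop_mult n (MM n x) (MM n y) p q"
  proof (cases "p < n \<and> q < n")
    case False thus ?thesis by (auto simp: MM_def trop_mult_def)
  next
    case True
    let ?f = "\<lambda>t. MM n x p t + MM n y t q"
    have fin: "finite (?f ` {..<n})" by simp
    show ?thesis
    proof (cases "p \<le> q")
      case False
      have "?f t = -\<infinity>" for t using False by (auto simp: MM_def)
      moreover have "(0::nat) \<in> {..<n}" using assms by auto
      ultimately have "?f ` {..<n} = {-\<infinity>}" by force
      thus ?thesis using True False by (simp add: MM_def trop_mult_def)
    next
      case le: True
      have "Max (?f ` {..<n}) = ereal (real (Lint p q (x @ y)))"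
      proof (rule Max_eqI[OF fin])
        fix z assume "z \<in> ?f ` {..<n}"
        then obtain t where t: "t < n" "z = ?f t" by auto
        show "z \<le> ereal (real (Lint p q (x @ y)))"
        proof (cases "p \<le> t \<and> t \<le> q")
          case True
          then have "Lint p t x + Lint t q y \<le> Lint p q (x @ y)" by (intro Lint_split_le) auto
          then show ?thesis using t True \<open>p < n \<and> q < n\<close> by (auto simp: MM_def)
        next
          case False then show ?thesis using t by (auto simp: MM_def)
        qed
      next
        obtain t where t: "p \<le> t" "t \<le> q" "Lint p q (x @ y) = Lint p t x + Lint t q y"
          using Lint_split_ex[OF le] by blast
        have "?f t = ereal (real (Lint p q (x @ y)))" using t True by (simp add: MM_def)
        moreover have "t < n" using t True by auto
        ultimately show "ereal (real (Lint p q (x @ y))) \<in> ?f ` {..<n}" by force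
      qed
      thus ?thesis using True le by (simp add: MM_def trop_mult_def)
    qed
  qed
qed

lemma clk_MM: "clk n u v \<longleftrightarrow> MM n u = MM n v"
proof
  assume "clk n u v" thus "MM n u = MM n v" unfolding clk_def MM_def by (intro ext) auto
next
  assume h: "MM n u = MM n v"
  show "clk n u v" unfolding clk_def
  proof (intro allI impI)
    fix i j assume "i \<le> j \<and> j < n"
    then have "MM n u i j = MM n v i j" using h by simp
    thus "Lint i j u = Lint i j v" using \<open>i \<le> j \<and> j < n\<close> by (simp add: MM_def)
  qed
qed

lemma K_mult_class:
  assumes "n \<ge> 1" "a \<in> lists {..<n}" "b \<in> lists {..<n}"
  shows "K_mult n (clk_class n a) (clk_class n b) = clk_class n (a @ b)"
proof -
  have "w \<in> K_mult n (clk_class n a) (clk_class n b) \<longleftrightarrow> w \<in> clk_class n (a @ b)" for w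
  proof
    assume "w \<in> K_mult n (clk_class n a) (clk_class n b)"
    then obtain x y where w: "w \<in> lists {..<n}" "MM n x = MM n a" "MM n y = MM n b"
      "MM n w = MM n (x @ y)"
      unfolding K_mult_def clk_class_def by (auto simp: clk_MM)
    then show "w \<in> clk_class n (a @ b)"
      unfolding clk_class_def using assms(1) by (simp add: clk_MM MM_append)
  next
    assume "w \<in> clk_class n (a @ b)"
    then show "w \<in> K_mult n (clk_class n a) (clk_class n b)"
      unfolding K_mult_def clk_class_def using assms by (auto simp: clk_MM)
  qed
  thus ?thesis by blast
qed

lemma eval_trop:
  assumes "n \<ge> 1" "u \<noteq> []"
  shows "eval_word (trop_mult n) (\<lambda>x. MM n (r x)) u = MM n (concat (map r u))"
  using assms(2)
proof (induction u)
  case Nil thus ?case by simp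
next
  case (Cons x xs)
  show ?case
  proof (cases xs)
    case Nil thus ?thesis by simp
  next
    case (Cons y ys)
    then show ?thesis using Cons.IH by (simp add: MM_append[OF assms(1)])
  qed
qed

lemma eval_K:
  assumes "n \<ge> 1" "u \<noteq> []" "\<And>x. r x \<in> lists {..<n}"
  shows "eval_word (K_mult n) (\<lambda>x. clk_class n (r x)) u = clk_class n (concat (map r u))"
  using assms(2)
proof (induction u)
  case Nil thus ?case by simp
next
  case (Cons x xs)
  show ?case
  proof (cases xs)
    case Nil thus ?thesis by simp
  next
    case (Cons y ys)
    have "concat (map r xs) \<in> lists {..<n}" using assms(3) by (force simp: in_lists_conv_set)
    have "eval_word (K_mult n) (\<lambda>x. clk_class n (r x)) (x # xs)
        = K_mult n (clk_class n (r x)) (eval_word (K_mult n) (\<lambda>x. clk_class n (r x)) xs)"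
      using Cons by simp
    also have "\<dots> = K_mult n (clk_class n (r x)) (clk_class n (concat (map r xs)))"
      using Cons Cons.IH by simp
    also have "\<dots> = clk_class n (r x @ concat (map r xs))"
      by (rule K_mult_class[OF assms(1) assms(3)]) fact
    finally show ?thesis by simp
  qed
qed

theorem mainTheorem8:
  fixes n :: nat and u v :: "'v list"
  assumes "n \<ge> 1"
    and "semigroup_identity u v"
    and "satisfies_id (TMat n) (trop_mult n) u v"
  shows "satisfies_id (K_carrier n) (K_mult n) u v"
  unfolding satisfies_id_def
proof (intro allI impI)
  fix \<sigma> :: "'v \<Rightarrow> nat list set"
  assume h: "\<forall>x. \<sigma> x \<in> K_carrier n"
  define r where "r x = (SOME w. w \<in> lists {..<n} \<and> \<sigma> x = clk_class n w)" for x
  have r: "r x \<in> lists {..<n} \<and> \<sigma> x = clk_class n (r x)" for x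
  proof -
    have "\<exists>w. w \<in> lists {..<n} \<and> \<sigma> x = clk_class n w" using h unfolding K_carrier_def by blast
    thus ?thesis unfolding r_def by (rule someI_ex)
  qed
  have sig: "\<sigma> = (\<lambda>x. clk_class n (r x))" using r by (intro ext) simp
  have ne: "u \<noteq> []" "v \<noteq> []" using assms(2) by (auto simp: semigroup_identity_def)
  have "eval_word (trop_mult n) (\<lambda>x. MM n (r x)) u = eval_word (trop_mult n) (\<lambda>x. MM n (r x)) v"
  proof -
    have A: "\<forall>\<tau>. (\<forall>x. \<tau> x \<in> TMat n) \<longrightarrow> eval_word (trop_mult n) \<tau> u = eval_word (trop_mult n) \<tau> v"
      using assms(3) by (simp add: satisfies_id_def)
    show ?thesis using A[rule_format, of "\<lambda>x. MM n (r x)"] MM_in by blast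
  qed
  hence "MM n (concat (map r u)) = MM n (concat (map r v))"
    using eval_trop[OF assms(1) ne(1), of r] eval_trop[OF assms(1) ne(2), of r] by simp
  hence "clk_class n (concat (map r u)) = clk_class n (concat (map r v))"
    unfolding clk_class_def by (simp add: clk_MM)
  thus "eval_word (K_mult n) \<sigma> u = eval_word (K_mult n) \<sigma> v"
    unfolding sig using eval_K[OF assms(1) ne(1), of r] eval_K[OF assms(1) ne(2), of r] r by simp
qed

end
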